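(* Let $R$ be a countable ring, let $B$ be a countable index set, and let $(M_\alpha)_{\alpha\in B}$ be any family of unitary left $R$-modules. Then the left $R$-module $$\prod_{\alpha\in B}M_\alpha\Big/\bigoplus_{\alpha\in B}M_\alpha$$ is algebraically compact.
   Context: All modules are unitary left $R$-modules. For a cardinal $\kappa$, a module $M$ is $\kappa$-compact if every system of at most $\kappa$ linear equations $\sum_{j\in J} r_{ij}x_j = m_i$ ($i\in I$, $r_{ij}\in R$, for each $i$ almost all $r_{ij}=0$, $m_i\in M$, $|I|,|J|\le\kappa$) has a solution in $M$ whenever every finite subsystem has a solution in $M$. $M$ is algebraically compact if it is $\kappa$-compact for every cardinal $\kappa$ (equivalently, $M$ is pure injective). *)

theory Defs
  imports "HOL-Algebra.Module" "HOL-Algebra.AbelCoset" "HOL-Library.Countable_Set"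
begin

text \<open>The HOL-Algebra locale module requires a commutative ring, so we define left modules
  directly, reusing the HOL-Algebra module record (its mult/one fields are ignored).\<close>

definition left_module :: "'r ring \<Rightarrow> ('r, 'm) module \<Rightarrow> bool" where
  "left_module R M \<longleftrightarrow> ring R \<and> abelian_group M \<and>
     (\<forall>a\<in>carrier R. \<forall>x\<in>carrier M. a \<odot>\<^bsub>M\<^esub> x \<in> carrier M) \<and>
     (\<forall>a\<in>carrier R. \<forall>b\<in>carrier R. \<forall>x\<in>carrier M.
        (a \<oplus>\<^bsub>R\<^esub> b) \<odot>\<^bsub>M\<^esub> x = (a \<odot>\<^bsub>M\<^esub> x) \<oplus>\<^bsub>M\<^esub> (b \<odot>\<^bsub>M\<^esub> x)) \<and>
     (\<forall>a\<in>carrier R. \<forall>x\<in>carrier M. \<forall>y\<in>carrier M.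
        a \<odot>\<^bsub>M\<^esub> (x \<oplus>\<^bsub>M\<^esub> y) = (a \<odot>\<^bsub>M\<^esub> x) \<oplus>\<^bsub>M\<^esub> (a \<odot>\<^bsub>M\<^esub> y)) \<and>
     (\<forall>a\<in>carrier R. \<forall>b\<in>carrier R. \<forall>x\<in>carrier M.
        (a \<otimes>\<^bsub>R\<^esub> b) \<odot>\<^bsub>M\<^esub> x = a \<odot>\<^bsub>M\<^esub> (b \<odot>\<^bsub>M\<^esub> x)) \<and>
     (\<forall>x\<in>carrier M. \<one>\<^bsub>R\<^esub> \<odot>\<^bsub>M\<^esub> x = x)"

definition prod_module :: "'b set \<Rightarrow> ('b \<Rightarrow> ('r, 'm) module) \<Rightarrow> ('r, 'b \<Rightarrow> 'm) module" where
  "prod_module B M =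
     \<lparr> carrier = (\<Pi>\<^sub>E a\<in>B. carrier (M a)),
       monoid.mult = undefined, one = undefined,
       zero = (\<lambda>a\<in>B. \<zero>\<^bsub>M a\<^esub>),
       add = (\<lambda>f g. \<lambda>a\<in>B. f a \<oplus>\<^bsub>M a\<^esub> g a),
       smult = (\<lambda>r f. \<lambda>a\<in>B. r \<odot>\<^bsub>M a\<^esub> f a) \<rparr>"

definition dsum_carrier :: "'b set \<Rightarrow> ('b \<Rightarrow> ('r, 'm) module) \<Rightarrow> ('b \<Rightarrow> 'm) set" where
  "dsum_carrier B M =
     {f \<in> carrier (prod_module B M). finite {a \<in> B. f a \<noteq> \<zero>\<^bsub>M a\<^esub>}}"

definition quot_module :: "('r, 'm) module \<Rightarrow> 'm set \<Rightarrow> ('r, 'm set) module" where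
  "quot_module M N =
     \<lparr> carrier = a_rcosets\<^bsub>M\<^esub> N,
       monoid.mult = undefined, one = undefined,
       zero = N,
       add = set_add M,
       smult = (\<lambda>r X. \<Union>x\<in>X. N +>\<^bsub>M\<^esub> (r \<odot>\<^bsub>M\<^esub> x)) \<rparr>"

definition lin_comb :: "'r ring \<Rightarrow> ('r, 'm) module \<Rightarrow> ('i \<Rightarrow> 'j \<Rightarrow> 'r) \<Rightarrow> ('j \<Rightarrow> 'm)
    \<Rightarrow> 'i \<Rightarrow> 'j set \<Rightarrow> 'm" where
  "lin_comb R M r x i J = finsum M (\<lambda>j. r i j \<odot>\<^bsub>M\<^esub> x j) {j \<in> J. r i j \<noteq> \<zero>\<^bsub>R\<^esub>}"

definition row_finite_system :: "'r ring \<Rightarrow> 'i set \<Rightarrow> 'j set \<Rightarrow> ('i \<Rightarrow> 'j \<Rightarrow> 'r) \<Rightarrow> bool" where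
  "row_finite_system R I J r \<longleftrightarrow>
     (\<forall>i\<in>I. \<forall>j\<in>J. r i j \<in> carrier R) \<and> (\<forall>i\<in>I. finite {j \<in> J. r i j \<noteq> \<zero>\<^bsub>R\<^esub>})"

definition sys_solvable :: "'r ring \<Rightarrow> ('r, 'm) module \<Rightarrow> 'i set \<Rightarrow> 'j set
    \<Rightarrow> ('i \<Rightarrow> 'j \<Rightarrow> 'r) \<Rightarrow> ('i \<Rightarrow> 'm) \<Rightarrow> bool" where
  "sys_solvable R M I J r m \<longleftrightarrow>
     (\<exists>x. (\<forall>j\<in>J. x j \<in> carrier M) \<and> (\<forall>i\<in>I. lin_comb R M r x i J = m i))"

text \<open>M is kappa-compact iff this holds for all
  I, J of cardinality at most kappa; M is algebraically compact iff it holds for all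
  index sets I, J (of arbitrary types).\<close>

definition compact_for :: "'r ring \<Rightarrow> ('r, 'm) module \<Rightarrow> 'i set \<Rightarrow> 'j set \<Rightarrow> bool" where
  "compact_for R M I J \<longleftrightarrow>
     (\<forall>r m. row_finite_system R I J r \<and> (\<forall>i\<in>I. m i \<in> carrier M) \<and>
        (\<forall>I0. finite I0 \<and> I0 \<subseteq> I \<longrightarrow> sys_solvable R M I0 J r m)
        \<longrightarrow> sys_solvable R M I J r m)"

end

theory Submission
  imports Defs
begin


lemma lm_ag: "left_module R N \<Longrightarrow> abelian_group N"
  by (simp add: left_module_def)
lemma lm_ring: "left_module R N \<Longrightarrow> ring R"
  by (simp add: left_module_def)
lemma lm_closed: "left_module R N \<Longrightarrow> a \<in> carrier R \<Longrightarrow> x \<in> carrier N \<Longrightarrow> a \<odot>\<^bsub>N\<^esub> x \<in> carrier N"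
  by (simp add: left_module_def)
lemma lm_distr: "left_module R N \<Longrightarrow> a \<in> carrier R \<Longrightarrow> x \<in> carrier N \<Longrightarrow> y \<in> carrier N \<Longrightarrow>
   a \<odot>\<^bsub>N\<^esub> (x \<oplus>\<^bsub>N\<^esub> y) = (a \<odot>\<^bsub>N\<^esub> x) \<oplus>\<^bsub>N\<^esub> (a \<odot>\<^bsub>N\<^esub> y)"
  by (simp add: left_module_def)
lemma lm_distl: "left_module R N \<Longrightarrow> a \<in> carrier R \<Longrightarrow> b \<in> carrier R \<Longrightarrow> x \<in> carrier N \<Longrightarrow>
   (a \<oplus>\<^bsub>R\<^esub> b) \<odot>\<^bsub>N\<^esub> x = (a \<odot>\<^bsub>N\<^esub> x) \<oplus>\<^bsub>N\<^esub> (b \<odot>\<^bsub>N\<^esub> x)"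
  by (simp add: left_module_def)

lemma lm_smult_zero: assumes "left_module R N" "a \<in> carrier R"
  shows "a \<odot>\<^bsub>N\<^esub> \<zero>\<^bsub>N\<^esub> = \<zero>\<^bsub>N\<^esub>"
proof -
  interpret abelian_group N using lm_ag[OF assms(1)] .
  have z: "\<zero>\<^bsub>N\<^esub> \<in> carrier N" by simp
  have c: "a \<odot>\<^bsub>N\<^esub> \<zero>\<^bsub>N\<^esub> \<in> carrier N" using lm_closed[OF assms z] .
  have "a \<odot>\<^bsub>N\<^esub> \<zero>\<^bsub>N\<^esub> = (a \<odot>\<^bsub>N\<^esub> \<zero>\<^bsub>N\<^esub>) \<oplus>\<^bsub>N\<^esub> (a \<odot>\<^bsub>N\<^esub> \<zero>\<^bsub>N\<^esub>)"
    using lm_distr[OF assms z z] by simp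
  then show ?thesis using c by simp
qed

lemma lm_zero_smult: assumes "left_module R N" "x \<in> carrier N"
  shows "\<zero>\<^bsub>R\<^esub> \<odot>\<^bsub>N\<^esub> x = \<zero>\<^bsub>N\<^esub>"
proof -
  interpret abelian_group N using lm_ag[OF assms(1)] .
  interpret R: ring R using lm_ring[OF assms(1)] .
  have z: "\<zero>\<^bsub>R\<^esub> \<in> carrier R" by simp
  have c: "\<zero>\<^bsub>R\<^esub> \<odot>\<^bsub>N\<^esub> x \<in> carrier N" using lm_closed[OF assms(1) z assms(2)] .
  have "\<zero>\<^bsub>R\<^esub> \<odot>\<^bsub>N\<^esub> x = (\<zero>\<^bsub>R\<^esub> \<odot>\<^bsub>N\<^esub> x) \<oplus>\<^bsub>N\<^esub> (\<zero>\<^bsub>R\<^esub> \<odot>\<^bsub>N\<^esub> x)"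
    using lm_distl[OF assms(1) z z assms(2)] by simp
  then show ?thesis using c by simp
qed

lemma lm_finsum_add:
  assumes "left_module R N" "finite F" "c \<in> F \<rightarrow> carrier R" "x \<in> F \<rightarrow> carrier N" "y \<in> F \<rightarrow> carrier N"
  shows "finsum N (\<lambda>j. c j \<odot>\<^bsub>N\<^esub> (x j \<oplus>\<^bsub>N\<^esub> y j)) F
     = finsum N (\<lambda>j. c j \<odot>\<^bsub>N\<^esub> x j) F \<oplus>\<^bsub>N\<^esub> finsum N (\<lambda>j. c j \<odot>\<^bsub>N\<^esub> y j) F"
proof -
  interpret abelian_group N using lm_ag[OF assms(1)] .
  have "finsum N (\<lambda>j. c j \<odot>\<^bsub>N\<^esub> (x j \<oplus>\<^bsub>N\<^esub> y j)) F
     = finsum N (\<lambda>j. (c j \<odot>\<^bsub>N\<^esub> x j) \<oplus>\<^bsub>N\<^esub> (c j \<odot>\<^bsub>N\<^esub> y j)) F"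
    using assms by (intro finsum_cong') (auto simp: lm_distr lm_closed Pi_def)
  also have "\<dots> = finsum N (\<lambda>j. c j \<odot>\<^bsub>N\<^esub> x j) F \<oplus>\<^bsub>N\<^esub> finsum N (\<lambda>j. c j \<odot>\<^bsub>N\<^esub> y j) F"
    using assms by (intro finsum_addf) (auto simp: lm_closed Pi_def)
  finally show ?thesis .
qed



lemma (in abelian_group) ag_sub_add: "x \<in> carrier G \<Longrightarrow> y \<in> carrier G \<Longrightarrow> (x \<ominus> y) \<oplus> y = x"
  by (simp add: a_minus_def a_assoc l_neg)
lemma (in abelian_group) ag_add_sub: "x \<in> carrier G \<Longrightarrow> y \<in> carrier G \<Longrightarrow> x \<oplus> (y \<ominus> x) = y"
  by (metis a_comm ag_sub_add minus_closed)
lemma (in abelian_group) ag_add_sub2: "x \<in> carrier G \<Longrightarrow> y \<in> carrier G \<Longrightarrow> (x \<oplus> y) \<ominus> y = x"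
  by (simp add: a_minus_def a_assoc r_neg)
lemma (in abelian_group) ag_sub_self: "x \<in> carrier G \<Longrightarrow> x \<ominus> x = \<zero>"
  by (simp add: a_minus_def r_neg)

locale qsetting =
  fixes R :: "'r ring" and B :: "'b set" and M :: "'b \<Rightarrow> ('r, 'm) module"
  assumes ringR: "ring R" and lmod: "\<forall>a\<in>B. left_module R (M a)"
begin

abbreviation "P \<equiv> prod_module B M"
abbreviation "S \<equiv> dsum_carrier B M"
abbreviation "Q \<equiv> quot_module P S"

lemma ag: "a \<in> B \<Longrightarrow> abelian_group (M a)"
  using lmod lm_ag by blast
lemma lm: "a \<in> B \<Longrightarrow> left_module R (M a)"
  using lmod by blast

lemma Ma_add_closed[simp]: "a \<in> B \<Longrightarrow> x \<in> carrier (M a) \<Longrightarrow> y \<in> carrier (M a) \<Longrightarrow> x \<oplus>\<^bsub>M a\<^esub> y \<in> carrier (M a)"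
  by (simp add: abelian_groupE(1)[OF ag])
lemma Ma_zero_closed[simp]: "a \<in> B \<Longrightarrow> \<zero>\<^bsub>M a\<^esub> \<in> carrier (M a)"
  by (simp add: abelian_groupE(2)[OF ag])
lemma Ma_assoc: "a \<in> B \<Longrightarrow> x \<in> carrier (M a) \<Longrightarrow> y \<in> carrier (M a) \<Longrightarrow> z \<in> carrier (M a) \<Longrightarrow> (x \<oplus>\<^bsub>M a\<^esub> y) \<oplus>\<^bsub>M a\<^esub> z = x \<oplus>\<^bsub>M a\<^esub> (y \<oplus>\<^bsub>M a\<^esub> z)"
  by (simp add: abelian_groupE(3)[OF ag])
lemma Ma_comm: "a \<in> B \<Longrightarrow> x \<in> carrier (M a) \<Longrightarrow> y \<in> carrier (M a) \<Longrightarrow> x \<oplus>\<^bsub>M a\<^esub> y = y \<oplus>\<^bsub>M a\<^esub> x"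
  by (simp add: abelian_groupE(4)[OF ag])
lemma Ma_lzero[simp]: "a \<in> B \<Longrightarrow> x \<in> carrier (M a) \<Longrightarrow> \<zero>\<^bsub>M a\<^esub> \<oplus>\<^bsub>M a\<^esub> x = x"
  by (simp add: abelian_groupE(5)[OF ag])
lemma Ma_rzero[simp]: "a \<in> B \<Longrightarrow> x \<in> carrier (M a) \<Longrightarrow> x \<oplus>\<^bsub>M a\<^esub> \<zero>\<^bsub>M a\<^esub> = x"
  using Ma_lzero Ma_comm Ma_zero_closed by metis
lemma Ma_minus_closed[simp]: "a \<in> B \<Longrightarrow> x \<in> carrier (M a) \<Longrightarrow> y \<in> carrier (M a) \<Longrightarrow> x \<ominus>\<^bsub>M a\<^esub> y \<in> carrier (M a)"
  by (simp add: abelian_group.minus_closed[OF ag])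
lemma Ma_sub_add[simp]: "a \<in> B \<Longrightarrow> x \<in> carrier (M a) \<Longrightarrow> y \<in> carrier (M a) \<Longrightarrow> (x \<ominus>\<^bsub>M a\<^esub> y) \<oplus>\<^bsub>M a\<^esub> y = x"
  by (simp add: abelian_group.ag_sub_add[OF ag])
lemma Ma_add_sub[simp]: "a \<in> B \<Longrightarrow> x \<in> carrier (M a) \<Longrightarrow> y \<in> carrier (M a) \<Longrightarrow> x \<oplus>\<^bsub>M a\<^esub> (y \<ominus>\<^bsub>M a\<^esub> x) = y"
  by (simp add: abelian_group.ag_add_sub[OF ag])
lemma Ma_add_sub2[simp]: "a \<in> B \<Longrightarrow> x \<in> carrier (M a) \<Longrightarrow> y \<in> carrier (M a) \<Longrightarrow> (x \<oplus>\<^bsub>M a\<^esub> y) \<ominus>\<^bsub>M a\<^esub> y = x"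
  by (simp add: abelian_group.ag_add_sub2[OF ag])
lemma Ma_sub_self[simp]: "a \<in> B \<Longrightarrow> x \<in> carrier (M a) \<Longrightarrow> x \<ominus>\<^bsub>M a\<^esub> x = \<zero>\<^bsub>M a\<^esub>"
  by (simp add: abelian_group.ag_sub_self[OF ag])
lemma Ma_smult_closed[simp]: "a \<in> B \<Longrightarrow> c \<in> carrier R \<Longrightarrow> x \<in> carrier (M a) \<Longrightarrow> c \<odot>\<^bsub>M a\<^esub> x \<in> carrier (M a)"
  by (simp add: lm_closed[OF lm])
lemma Ma_am: "a \<in> B \<Longrightarrow> abelian_monoid (M a)"
  by (simp add: abelian_group.axioms(1)[OF ag])

lemma fin_trans: "finite {a\<in>B. u a \<noteq> v a} \<Longrightarrow> finite {a\<in>B. v a \<noteq> w a} \<Longrightarrow> finite {a\<in>B. u a \<noteq> w a}"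
proof -
  assume "finite {a\<in>B. u a \<noteq> v a}" "finite {a\<in>B. v a \<noteq> w a}"
  then have "finite ({a\<in>B. u a \<noteq> v a} \<union> {a\<in>B. v a \<noteq> w a})" by simp
  then show "finite {a\<in>B. u a \<noteq> w a}" by (rule finite_subset[rotated]) auto
qed

lemma restr_coll[simp]: "{a\<in>B. x a \<noteq> (\<lambda>a\<in>B. f a) a} = {a\<in>B. x a \<noteq> f a}"
  by auto

lemma carrier_P: "carrier P = (\<Pi>\<^sub>E a\<in>B. carrier (M a))"
  by (simp add: prod_module_def)
lemma mem_P: "x \<in> carrier P \<longleftrightarrow> (\<forall>a\<in>B. x a \<in> carrier (M a)) \<and> x \<in> extensional B"
  by (simp add: carrier_P PiE_iff)

lemma zero_P: "\<zero>\<^bsub>P\<^esub> = (\<lambda>a\<in>B. \<zero>\<^bsub>M a\<^esub>)"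
  by (simp add: prod_module_def)
lemma add_P: "x \<oplus>\<^bsub>P\<^esub> y = (\<lambda>a\<in>B. x a \<oplus>\<^bsub>M a\<^esub> y a)"
  by (simp add: prod_module_def)
lemma smult_P: "c \<odot>\<^bsub>P\<^esub> y = (\<lambda>a\<in>B. c \<odot>\<^bsub>M a\<^esub> y a)"
  by (simp add: prod_module_def)

definition cls :: "('b \<Rightarrow> 'm) \<Rightarrow> ('b \<Rightarrow> 'm) set" where
  "cls y = {z \<in> carrier P. finite {a\<in>B. z a \<noteq> y a}}"

lemma coset_cls: assumes y: "y \<in> carrier P" shows "S +>\<^bsub>P\<^esub> y = cls y"
proof
  show "S +>\<^bsub>P\<^esub> y \<subseteq> cls y"
  proof
    fix z assume "z \<in> S +>\<^bsub>P\<^esub> y"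
    then obtain h where h: "h \<in> S" "z = h \<oplus>\<^bsub>P\<^esub> y"
      unfolding a_r_coset_def' by blast
    have hc: "h \<in> carrier P" and hf: "finite {a\<in>B. h a \<noteq> \<zero>\<^bsub>M a\<^esub>}"
      using h(1) by (auto simp: dsum_carrier_def)
    have zc: "z \<in> carrier P" using h hc y
      by (auto simp: mem_P add_P )
    have "{a\<in>B. z a \<noteq> y a} \<subseteq> {a\<in>B. h a \<noteq> \<zero>\<^bsub>M a\<^esub>}"
      using h(2) y by (auto simp: add_P mem_P )
    then show "z \<in> cls y" using zc hf finite_subset unfolding cls_def by blast
  qed
next
  show "cls y \<subseteq> S +>\<^bsub>P\<^esub> y"
  proof
    fix z assume z: "z \<in> cls y"
    then have zc: "z \<in> carrier P" and zf: "finite {a\<in>B. z a \<noteq> y a}" by (auto simp: cls_def)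
    define h where "h = (\<lambda>a\<in>B. z a \<ominus>\<^bsub>M a\<^esub> y a)"
    have hc: "h \<in> carrier P" using zc y
      by (auto simp: h_def mem_P )
    have "{a\<in>B. h a \<noteq> \<zero>\<^bsub>M a\<^esub>} \<subseteq> {a\<in>B. z a \<noteq> y a}"
      using zc y by (auto simp: h_def mem_P )
    then have hS: "h \<in> S" using hc zf finite_subset unfolding dsum_carrier_def by blast
    have "h \<oplus>\<^bsub>P\<^esub> y = z" using zc y
      by (auto simp: h_def add_P mem_P  PiE_def extensional_def)
    then show "z \<in> S +>\<^bsub>P\<^esub> y" using hS unfolding a_r_coset_def' by blast
  qed
qed

lemma cls_refl: "y \<in> carrier P \<Longrightarrow> y \<in> cls y"
  by (simp add: cls_def)

lemma cls_eq_iff: assumes "y \<in> carrier P" "z \<in> carrier P"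
  shows "cls y = cls z \<longleftrightarrow> finite {a\<in>B. y a \<noteq> z a}"
proof
  assume "cls y = cls z"
  then have "y \<in> cls z" using cls_refl[OF assms(1)] by simp
  then show "finite {a\<in>B. y a \<noteq> z a}" by (simp add: cls_def)
next
  assume f: "finite {a\<in>B. y a \<noteq> z a}"
  have "finite {a\<in>B. z a \<noteq> y a}" using f by (simp add: eq_commute)
  then show "cls y = cls z" unfolding cls_def using fin_trans f by blast
qed

lemma carrier_Q: "carrier Q = cls ` carrier P"
  by (auto simp: quot_module_def A_RCOSETS_def' coset_cls)

lemma zero_Q: "\<zero>\<^bsub>Q\<^esub> = cls \<zero>\<^bsub>P\<^esub>"
  by (auto simp: quot_module_def dsum_carrier_def cls_def zero_P mem_P) (auto elim!: finite_subset[rotated])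

lemma zero_P_c: "\<zero>\<^bsub>P\<^esub> \<in> carrier P"
  by (auto simp: zero_P mem_P )

lemma add_P_c: "x \<in> carrier P \<Longrightarrow> y \<in> carrier P \<Longrightarrow> x \<oplus>\<^bsub>P\<^esub> y \<in> carrier P"
  by (auto simp: add_P mem_P )

lemma smult_P_c: "c \<in> carrier R \<Longrightarrow> y \<in> carrier P \<Longrightarrow> c \<odot>\<^bsub>P\<^esub> y \<in> carrier P"
  by (auto simp: smult_P mem_P )

lemma add_Q: assumes "y \<in> carrier P" "z \<in> carrier P"
  shows "cls y \<oplus>\<^bsub>Q\<^esub> cls z = cls (y \<oplus>\<^bsub>P\<^esub> z)"
proof -
  have "cls y \<oplus>\<^bsub>Q\<^esub> cls z = set_add P (cls y) (cls z)" by (simp add: quot_module_def)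
  also have "\<dots> = cls (y \<oplus>\<^bsub>P\<^esub> z)"
  proof
    show "set_add P (cls y) (cls z) \<subseteq> cls (y \<oplus>\<^bsub>P\<^esub> z)"
    proof
      fix w assume "w \<in> set_add P (cls y) (cls z)"
      then obtain u v where uv: "u \<in> cls y" "v \<in> cls z" "w = u \<oplus>\<^bsub>P\<^esub> v"
        unfolding set_add_def' by blast
      have "{a\<in>B. w a \<noteq> (y \<oplus>\<^bsub>P\<^esub> z) a} \<subseteq> {a\<in>B. u a \<noteq> y a} \<union> {a\<in>B. v a \<noteq> z a}"
        using uv by (auto simp: add_P)
      moreover have "w \<in> carrier P" using uv add_P_c by (auto simp: cls_def)
      ultimately show "w \<in> cls (y \<oplus>\<^bsub>P\<^esub> z)" using uv unfolding cls_def
        by (auto intro: finite_subset)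
    qed
  next
    show "cls (y \<oplus>\<^bsub>P\<^esub> z) \<subseteq> set_add P (cls y) (cls z)"
    proof
      fix w assume w: "w \<in> cls (y \<oplus>\<^bsub>P\<^esub> z)"
      then have wc: "w \<in> carrier P" and wf: "finite {a\<in>B. w a \<noteq> (y \<oplus>\<^bsub>P\<^esub> z) a}" by (auto simp: cls_def)
      define u where "u = (\<lambda>a\<in>B. w a \<ominus>\<^bsub>M a\<^esub> z a)"
      have uc: "u \<in> carrier P" using wc assms
        by (auto simp: u_def mem_P )
      have "{a\<in>B. u a \<noteq> y a} \<subseteq> {a\<in>B. w a \<noteq> (y \<oplus>\<^bsub>P\<^esub> z) a}"
        using wc assms by (auto simp: u_def add_P mem_P )
      then have "u \<in> cls y" using uc wf finite_subset unfolding cls_def by blast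
      moreover have "w = u \<oplus>\<^bsub>P\<^esub> z" using wc assms
        by (auto simp: u_def add_P mem_P  PiE_def extensional_def)
      moreover have "z \<in> cls z" using assms cls_refl by blast
      ultimately show "w \<in> set_add P (cls y) (cls z)" unfolding set_add_def' by blast
    qed
  qed
  finally show ?thesis .
qed

lemma smult_Q: assumes "c \<in> carrier R" "y \<in> carrier P"
  shows "c \<odot>\<^bsub>Q\<^esub> cls y = cls (c \<odot>\<^bsub>P\<^esub> y)"
proof -
  have "c \<odot>\<^bsub>Q\<^esub> cls y = (\<Union>x\<in>cls y. S +>\<^bsub>P\<^esub> (c \<odot>\<^bsub>P\<^esub> x))" by (simp add: quot_module_def)
  also have "\<dots> = (\<Union>x\<in>cls y. cls (c \<odot>\<^bsub>P\<^esub> x))"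
    using assms smult_P_c coset_cls by (auto simp: cls_def)
  also have "\<dots> = cls (c \<odot>\<^bsub>P\<^esub> y)"
  proof -
    have "\<And>x. x \<in> cls y \<Longrightarrow> cls (c \<odot>\<^bsub>P\<^esub> x) = cls (c \<odot>\<^bsub>P\<^esub> y)"
    proof -
      fix x assume x: "x \<in> cls y"
      then have xc: "x \<in> carrier P" and f: "finite {a\<in>B. x a \<noteq> y a}" by (auto simp: cls_def)
      have "{a\<in>B. (c \<odot>\<^bsub>P\<^esub> x) a \<noteq> (c \<odot>\<^bsub>P\<^esub> y) a} \<subseteq> {a\<in>B. x a \<noteq> y a}"
        by (auto simp: smult_P)
      then have "finite {a\<in>B. (c \<odot>\<^bsub>P\<^esub> x) a \<noteq> (c \<odot>\<^bsub>P\<^esub> y) a}" using f finite_subset by blast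
      then show "cls (c \<odot>\<^bsub>P\<^esub> x) = cls (c \<odot>\<^bsub>P\<^esub> y)"
        using cls_eq_iff[OF smult_P_c[OF assms(1) xc] smult_P_c[OF assms]] by simp
    qed
    then show ?thesis using cls_refl[OF assms(2)] by blast
  qed
  finally show ?thesis .
qed

lemma P_assoc: "x \<in> carrier P \<Longrightarrow> y \<in> carrier P \<Longrightarrow> z \<in> carrier P \<Longrightarrow>
   (x \<oplus>\<^bsub>P\<^esub> y) \<oplus>\<^bsub>P\<^esub> z = x \<oplus>\<^bsub>P\<^esub> (y \<oplus>\<^bsub>P\<^esub> z)"
  by (auto simp: add_P mem_P Ma_assoc)
lemma P_comm: "x \<in> carrier P \<Longrightarrow> y \<in> carrier P \<Longrightarrow> x \<oplus>\<^bsub>P\<^esub> y = y \<oplus>\<^bsub>P\<^esub> x"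
  by (auto simp: add_P mem_P Ma_comm)
lemma P_lzero: "x \<in> carrier P \<Longrightarrow> \<zero>\<^bsub>P\<^esub> \<oplus>\<^bsub>P\<^esub> x = x"
  by (auto simp: add_P zero_P mem_P PiE_def extensional_def )

lemma Q_am: "abelian_monoid Q"
proof (rule abelian_monoidI)
  fix x y assume "x \<in> carrier Q" "y \<in> carrier Q"
  then show "x \<oplus>\<^bsub>Q\<^esub> y \<in> carrier Q" by (auto simp: carrier_Q add_Q add_P_c)
next
  show "\<zero>\<^bsub>Q\<^esub> \<in> carrier Q" by (simp add: carrier_Q zero_Q zero_P_c)
next
  fix x y z assume "x \<in> carrier Q" "y \<in> carrier Q" "z \<in> carrier Q"
  then show "x \<oplus>\<^bsub>Q\<^esub> y \<oplus>\<^bsub>Q\<^esub> z = x \<oplus>\<^bsub>Q\<^esub> (y \<oplus>\<^bsub>Q\<^esub> z)"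
    by (auto simp: carrier_Q add_Q add_P_c P_assoc)
next
  fix x assume "x \<in> carrier Q"
  then show "\<zero>\<^bsub>Q\<^esub> \<oplus>\<^bsub>Q\<^esub> x = x" by (auto simp: carrier_Q zero_Q add_Q zero_P_c P_lzero)
next
  fix x y assume "x \<in> carrier Q" "y \<in> carrier Q"
  then show "x \<oplus>\<^bsub>Q\<^esub> y = y \<oplus>\<^bsub>Q\<^esub> x" by (auto simp: carrier_Q add_Q P_comm)
qed

lemma finsum_Q:
  assumes "finite F" "\<And>j. j \<in> F \<Longrightarrow> c j \<in> carrier R" "\<And>j. j \<in> F \<Longrightarrow> X j \<in> carrier P"
  shows "finsum Q (\<lambda>j. c j \<odot>\<^bsub>Q\<^esub> cls (X j)) F
       = cls (\<lambda>a\<in>B. finsum (M a) (\<lambda>j. c j \<odot>\<^bsub>M a\<^esub> X j a) F)"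
  using assms
proof (induction F rule: finite_induct)
  case empty
  then show ?case
    by (simp add: abelian_monoid.finsum_empty[OF Q_am] zero_Q zero_P abelian_monoid.finsum_empty[OF Ma_am] restrict_def cong: if_cong)
next
  case (insert j F)
  have cP: "(\<lambda>a\<in>B. finsum (M a) (\<lambda>j. c j \<odot>\<^bsub>M a\<^esub> X j a) F) \<in> carrier P"
    using insert by (auto simp: mem_P intro!: abelian_monoid.finsum_closed[OF Ma_am]
       )
  have "finsum Q (\<lambda>j. c j \<odot>\<^bsub>Q\<^esub> cls (X j)) (insert j F) =
     c j \<odot>\<^bsub>Q\<^esub> cls (X j) \<oplus>\<^bsub>Q\<^esub> finsum Q (\<lambda>j. c j \<odot>\<^bsub>Q\<^esub> cls (X j)) F"
    using insert by (intro abelian_monoid.finsum_insert[OF Q_am])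
      (auto simp: smult_Q carrier_Q smult_P_c)
  also have "\<dots> = cls (c j \<odot>\<^bsub>P\<^esub> X j) \<oplus>\<^bsub>Q\<^esub> cls (\<lambda>a\<in>B. finsum (M a) (\<lambda>j. c j \<odot>\<^bsub>M a\<^esub> X j a) F)"
    using insert by (simp add: smult_Q restrict_def)
  also have "\<dots> = cls ((c j \<odot>\<^bsub>P\<^esub> X j) \<oplus>\<^bsub>P\<^esub> (\<lambda>a\<in>B. finsum (M a) (\<lambda>j. c j \<odot>\<^bsub>M a\<^esub> X j a) F))"
    using insert cP by (intro add_Q) (auto simp: smult_P_c)
  also have "(c j \<odot>\<^bsub>P\<^esub> X j) \<oplus>\<^bsub>P\<^esub> (\<lambda>a\<in>B. finsum (M a) (\<lambda>j. c j \<odot>\<^bsub>M a\<^esub> X j a) F)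
     = (\<lambda>a\<in>B. finsum (M a) (\<lambda>j. c j \<odot>\<^bsub>M a\<^esub> X j a) (insert j F))"
    unfolding add_P proof (rule restrict_ext)
    fix a assume a: "a \<in> B"
    show "(c j \<odot>\<^bsub>P\<^esub> X j) a \<oplus>\<^bsub>M a\<^esub> (\<lambda>a\<in>B. finsum (M a) (\<lambda>j. c j \<odot>\<^bsub>M a\<^esub> X j a) F) a
       = finsum (M a) (\<lambda>j. c j \<odot>\<^bsub>M a\<^esub> X j a) (insert j F)"
      using insert a
      by (simp add: smult_P, subst abelian_monoid.finsum_insert[OF Ma_am])
        (auto simp: mem_P intro!: )
  qed
  finally show ?case .
qed

end


locale msetting = qsetting R B M for R :: "'r ring" and B :: "'b set" and M :: "'b \<Rightarrow> ('r, 'm) module" +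
  fixes I :: "'i set" and J :: "'j set" and r :: "'i \<Rightarrow> 'j \<Rightarrow> 'r" and mm :: "'i \<Rightarrow> 'b \<Rightarrow> 'm"
  assumes countR: "countable (carrier R)" and countB: "countable B"
    and rf: "row_finite_system R I J r" and mmc: "\<forall>i\<in>I. mm i \<in> carrier P"
begin

definition L :: "'b \<Rightarrow> ('j \<Rightarrow> 'b \<Rightarrow> 'm) \<Rightarrow> 'i \<Rightarrow> 'm" where
  "L a X i = lin_comb R (M a) r (\<lambda>j. X j a) i J"

definition sol :: "'i set \<Rightarrow> ('j \<Rightarrow> 'b \<Rightarrow> 'm) \<Rightarrow> bool" where
  "sol I0 X \<longleftrightarrow> (\<forall>j\<in>J. X j \<in> carrier P) \<and> (\<forall>i\<in>I0. finite {a\<in>B. L a X i \<noteq> mm i a})"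

definition cons :: "('j \<times> ('b \<Rightarrow> 'm)) set \<Rightarrow> ('j \<Rightarrow> 'b \<Rightarrow> 'm) \<Rightarrow> bool" where
  "cons G X \<longleftrightarrow> (\<forall>(j,p)\<in>G. X j = p)"

definition good :: "('j \<times> ('b \<Rightarrow> 'm)) set \<Rightarrow> bool" where
  "good G \<longleftrightarrow> (\<forall>I0. finite I0 \<and> I0 \<subseteq> I \<longrightarrow> (\<exists>X. sol I0 X \<and> cons G X))"

lemma rc: "i \<in> I \<Longrightarrow> j \<in> J \<Longrightarrow> r i j \<in> carrier R"
  using rf by (simp add: row_finite_system_def)
lemma rfin: "i \<in> I \<Longrightarrow> finite {j\<in>J. r i j \<noteq> \<zero>\<^bsub>R\<^esub>}"
  using rf by (simp add: row_finite_system_def)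

lemma L_cong:
  assumes "i \<in> I" "a \<in> B" "\<forall>j\<in>J. X j \<in> carrier P" "\<forall>j\<in>J. Y j \<in> carrier P"
    "\<And>j. j \<in> J \<Longrightarrow> r i j \<noteq> \<zero>\<^bsub>R\<^esub> \<Longrightarrow> X j a = Y j a"
  shows "L a X i = L a Y i"
  unfolding L_def lin_comb_def
  using assms by (intro abelian_monoid.finsum_cong'[OF Ma_am]) (auto simp: mem_P rc)

lemma L_closed:
  assumes "i \<in> I" "a \<in> B" "\<forall>j\<in>J. X j \<in> carrier P"
  shows "L a X i \<in> carrier (M a)"
  unfolding L_def lin_comb_def
  using assms by (intro abelian_monoid.finsum_closed[OF Ma_am]) (auto simp: mem_P rc)

lemma L_add:
  assumes "i \<in> I" "a \<in> B" "\<forall>j\<in>J. X j \<in> carrier P" "\<forall>j\<in>J. Y j \<in> carrier P"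
  shows "L a (\<lambda>j. \<lambda>a\<in>B. X j a \<oplus>\<^bsub>M a\<^esub> Y j a) i = L a X i \<oplus>\<^bsub>M a\<^esub> L a Y i"
  unfolding L_def lin_comb_def
  using assms rfin[OF assms(1)]
  by (simp, intro lm_finsum_add[OF lm]) (auto simp: mem_P rc)

lemma fin_lt: "finite {a\<in>B. to_nat_on B a < k}"
proof -
  have "{a\<in>B. to_nat_on B a < k} = to_nat_on B -` {..<k} \<inter> B" by auto
  then show ?thesis using finite_vimage_IntI[OF _ inj_on_to_nat_on[OF countB]] by simp
qed

lemma countable_sol:
  assumes cI: "countable I'" and sub: "I' \<subseteq> I" and dom: "Domain G \<subseteq> J" and g: "good G"
  shows "\<exists>X. sol I' X \<and> cons G X"
proof (cases "I' = {}")
  case True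
  then show ?thesis using g unfolding good_def sol_def by (metis empty_iff finite.emptyI empty_subsetI)
next
  case False
  define f where "f = from_nat_into I'"
  have rf': "range f = I'" using range_from_nat_into[OF False cI] f_def by simp
  define K where "K n = f ` {..n}" for n
  have KI: "finite (K n) \<and> K n \<subseteq> I" for n using rf' sub by (auto simp: K_def)
  have "\<forall>n. \<exists>X. sol (K n) X \<and> cons G X" using g KI unfolding good_def by blast
  then obtain Xs where Xs: "\<And>n. sol (K n) (Xs n) \<and> cons G (Xs n)" by metis
  define E where "E n = (\<Union>i\<in>K n. {a\<in>B. L a (Xs n) i \<noteq> mm i a})" for n
  have Efin: "finite (E n)" for n using Xs[of n] KI[of n] by (auto simp: E_def sol_def)
  define g where "g = to_nat_on B"
  define N where "N n = Suc (Max (insert 0 (g ` E n)))" for n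
  have EN: "a \<in> E n \<Longrightarrow> g a < N n" for a n
    using Efin[of n] by (auto simp: N_def intro!: le_imp_less_Suc Max_ge)
  define Sa where "Sa a = {n. n \<le> g a \<and> N n \<le> g a}" for a
  define na where "na a = Max (Sa a)" for a
  define X where "X j = (\<lambda>a\<in>B. Xs (na a) j a)" for j
  have Xc: "\<forall>j\<in>J. X j \<in> carrier P"
    using Xs by (auto simp: X_def mem_P sol_def)
  have XL: "L a X i = L a (Xs (na a)) i" if "a \<in> B" for a i
    using that by (simp add: L_def X_def)
  have "finite {a\<in>B. L a X i \<noteq> mm i a}" if i: "i \<in> I'" for i
  proof -
    obtain m where m: "i = f m" using i rf' by blast
    have "{a\<in>B. L a X i \<noteq> mm i a} \<subseteq> {a\<in>B. g a < max m (N m)}"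
    proof (rule ccontr)
      assume "\<not> ?thesis"
      then obtain a where a0: "a \<in> B" "L a X i \<noteq> mm i a" "\<not> g a < max m (N m)" by auto
      then have a: "a \<in> B" "L a X i \<noteq> mm i a" "m \<le> g a" "N m \<le> g a" by auto
      have mS: "m \<in> Sa a" using a by (simp add: Sa_def)
      have finS: "finite (Sa a)" by (rule finite_subset[of _ "{..g a}"]) (auto simp: Sa_def)
      have naS: "na a \<in> Sa a" using Max_in[OF finS] mS by (auto simp: na_def)
      have "m \<le> na a" using Max_ge[OF finS mS] by (simp add: na_def)
      then have iK: "i \<in> K (na a)" using m by (auto simp: K_def)
      have "a \<notin> E (na a)" using naS EN[of a "na a"] by (auto simp: Sa_def)
      then have "L a (Xs (na a)) i = mm i a" using iK a(1) by (auto simp: E_def)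
      then show False using a XL by simp
    qed
    moreover have "finite {a\<in>B. g a < max m (N m)}" using fin_lt by (simp add: g_def)
    ultimately show ?thesis by (rule finite_subset)
  qed
  then have "sol I' X" using Xc by (simp add: sol_def)
  moreover have "cons G X"
    unfolding cons_def
  proof (clarify)
    fix j p assume jp: "(j, p) \<in> G"
    have pj: "\<And>n. Xs n j = p" using Xs jp unfolding cons_def by fast
    have "j \<in> J" using jp dom by auto
    then have "p \<in> carrier P" using Xs[of 0] pj[of 0] by (auto simp: sol_def)
    then show "X j = p" using pj by (auto simp: X_def mem_P extensional_def)
  qed
  ultimately show ?thesis by blast
qed

end


context msetting begin

lemma reindex:
  assumes a: "a \<in> B" and i: "i \<in> I" and dvs: "distinct vs" and vsJ: "set vs \<subseteq> J"
    and cov: "{j\<in>J. r i j \<noteq> \<zero>\<^bsub>R\<^esub>} - J' \<subseteq> set vs" and disj: "set vs \<inter> J' = {}"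
    and xc: "\<forall>j\<in>J. x j \<in> carrier (M a)" and x0: "\<forall>j\<in>J'. x j = \<zero>\<^bsub>M a\<^esub>"
  shows "lin_comb R (M a) r x i J = finsum (M a) (\<lambda>k. r i (vs!k) \<odot>\<^bsub>M a\<^esub> x (vs!k)) {..<length vs}"
proof -
  interpret Ma: abelian_monoid "M a" using Ma_am[OF a] .
  define F where "F = {j\<in>J. r i j \<noteq> \<zero>\<^bsub>R\<^esub>}"
  have fF: "finite F" using rfin[OF i] by (simp add: F_def)
  have "lin_comb R (M a) r x i J = finsum (M a) (\<lambda>j. r i j \<odot>\<^bsub>M a\<^esub> x j) F"
    by (simp add: lin_comb_def F_def)
  also have "\<dots> = finsum (M a) (\<lambda>j. r i j \<odot>\<^bsub>M a\<^esub> x j) (set vs)"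
  proof (rule Ma.add.finprod_mono_neutral_cong)
    show "finite (set vs)" "finite F" using fF by auto
    show "r i j \<odot>\<^bsub>M a\<^esub> x j = \<zero>\<^bsub>M a\<^esub>" if "j \<in> set vs - F" for j
    proof -
      have "j \<in> J" "r i j = \<zero>\<^bsub>R\<^esub>" using that vsJ by (auto simp: F_def)
      then show ?thesis using lm_zero_smult[OF lm[OF a]] xc by simp
    qed
    show "r i j \<odot>\<^bsub>M a\<^esub> x j = \<zero>\<^bsub>M a\<^esub>" if "j \<in> F - set vs" for j
    proof -
      have "j \<in> J'" "j \<in> J" using that cov by (auto simp: F_def)
      then show ?thesis using lm_smult_zero[OF lm[OF a] rc[OF i]] x0 by simp
    qed
  qed (use a xc vsJ rc[OF i] in \<open>auto simp: F_def\<close>)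
  also have "set vs = (\<lambda>k. vs!k) ` {..<length vs}" by (auto simp: set_conv_nth)
  also have "finsum (M a) (\<lambda>j. r i j \<odot>\<^bsub>M a\<^esub> x j) ((\<lambda>k. vs!k) ` {..<length vs})
      = finsum (M a) (\<lambda>k. r i (vs!k) \<odot>\<^bsub>M a\<^esub> x (vs!k)) {..<length vs}"
  proof (rule Ma.finsum_reindex)
    have "\<And>k. k < length vs \<Longrightarrow> vs!k \<in> J" using vsJ nth_mem by blast
    then show "(\<lambda>j. r i j \<odot>\<^bsub>M a\<^esub> x j) \<in> (!) vs ` {..<length vs} \<rightarrow> carrier (M a)"
      using a xc rc[OF i] by auto
  qed (use inj_on_nth[OF dvs, of "{..<length vs}"] in auto)
  finally show ?thesis .
qed

definition Vars :: "'i set \<Rightarrow> 'j set" where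
  "Vars I0 = {j\<in>J. \<exists>i\<in>I0. r i j \<noteq> \<zero>\<^bsub>R\<^esub>}"

lemma Vars_fin: "finite I0 \<Longrightarrow> I0 \<subseteq> I \<Longrightarrow> finite (Vars I0)"
proof -
  assume "finite I0" "I0 \<subseteq> I"
  then have "finite (\<Union>i\<in>I0. {j\<in>J. r i j \<noteq> \<zero>\<^bsub>R\<^esub>})" using rfin by auto
  moreover have "Vars I0 = (\<Union>i\<in>I0. {j\<in>J. r i j \<noteq> \<zero>\<^bsub>R\<^esub>})" by (auto simp: Vars_def)
  ultimately show ?thesis by simp
qed

definition vs :: "'j set \<Rightarrow> 'j \<Rightarrow> 'i set \<Rightarrow> 'j list" where
  "vs J' j0 I0 = j0 # (SOME xs. distinct xs \<and> set xs = Vars I0 - J' - {j0})"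

lemma vs_props:
  assumes "finite I0" "I0 \<subseteq> I" "j0 \<in> J" "j0 \<notin> J'"
  shows "distinct (vs J' j0 I0)" "set (vs J' j0 I0) = insert j0 (Vars I0 - J')"
    "vs J' j0 I0 ! 0 = j0"
proof -
  have "\<exists>xs. distinct xs \<and> set xs = Vars I0 - J' - {j0}"
    using finite_distinct_list[of "Vars I0 - J' - {j0}"] Vars_fin[OF assms(1,2)] by auto
  then have *: "distinct (SOME xs. distinct xs \<and> set xs = Vars I0 - J' - {j0}) \<and>
      set (SOME xs. distinct xs \<and> set xs = Vars I0 - J' - {j0}) = Vars I0 - J' - {j0}"
    by (rule someI_ex)
  then show "distinct (vs J' j0 I0)" "set (vs J' j0 I0) = insert j0 (Vars I0 - J')"
    "vs J' j0 I0 ! 0 = j0" using assms by (auto simp: vs_def)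
qed

definition tau :: "'j set \<Rightarrow> 'j \<Rightarrow> 'i set \<Rightarrow> 'r list set" where
  "tau J' j0 I0 = (\<lambda>i. map (r i) (vs J' j0 I0)) ` I0"

definition Hs :: "'j set \<Rightarrow> 'j \<Rightarrow> 'i set \<Rightarrow> ('b \<Rightarrow> 'm) set" where
  "Hs J' j0 I0 = {D j0 | D. (\<forall>j\<in>J. D j \<in> carrier P) \<and> (\<forall>j\<in>J'. D j = \<zero>\<^bsub>P\<^esub>) \<and>
      (\<forall>i\<in>I0. finite {a\<in>B. L a D i \<noteq> \<zero>\<^bsub>M a\<^esub>})}"

definition Gm :: "'r list set \<Rightarrow> ('b \<Rightarrow> 'm) set" where
  "Gm rows = {y 0 | y. (\<forall>k. y k \<in> carrier P) \<and>
      (\<forall>row\<in>rows. finite {a\<in>B. finsum (M a) (\<lambda>k. (row!k) \<odot>\<^bsub>M a\<^esub> y k a) {..<length row} \<noteq> \<zero>\<^bsub>M a\<^esub>})}"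

lemma tau_count: "finite I0 \<Longrightarrow> I0 \<subseteq> I \<Longrightarrow> J' \<subseteq> J \<Longrightarrow> j0 \<in> J \<Longrightarrow> j0 \<notin> J' \<Longrightarrow>
    tau J' j0 I0 \<in> {A. finite A \<and> A \<subseteq> lists (carrier R)}"
  using vs_props[of I0 j0 J'] rc by (auto simp: tau_def Vars_def) (meson rc subsetD)+

lemma H_eq:
  assumes I0: "finite I0" "I0 \<subseteq> I" and J': "J' \<subseteq> J" and j0: "j0 \<in> J" "j0 \<notin> J'"
  shows "Hs J' j0 I0 = Gm (tau J' j0 I0)"
proof -
  define v where "v = vs J' j0 I0"
  have dv: "distinct v" and sv: "set v = insert j0 (Vars I0 - J')" and v0: "v!0 = j0"
    using vs_props[OF I0 j0] by (auto simp: v_def)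
  have vJ: "set v \<subseteq> J" using sv j0 by (auto simp: Vars_def)
  have vdisj: "set v \<inter> J' = {}" using sv j0 by auto
  have cov: "i \<in> I0 \<Longrightarrow> {j\<in>J. r i j \<noteq> \<zero>\<^bsub>R\<^esub>} - J' \<subseteq> set v" for i
    using sv by (auto simp: Vars_def)
  have lenv: "0 < length v" using sv by (cases v) auto
  have vk: "k < length v \<Longrightarrow> v!k \<in> J" for k using vJ nth_mem by blast
  show ?thesis
  proof
    show "Hs J' j0 I0 \<subseteq> Gm (tau J' j0 I0)"
    proof
      fix z assume "z \<in> Hs J' j0 I0"
      then obtain D where z: "z = D j0" and Dc: "\<forall>j\<in>J. D j \<in> carrier P"
        and D0: "\<forall>j\<in>J'. D j = \<zero>\<^bsub>P\<^esub>" and Df: "\<forall>i\<in>I0. finite {a\<in>B. L a D i \<noteq> \<zero>\<^bsub>M a\<^esub>}"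
        unfolding Hs_def by blast
      define y where "y k = (if k < length v then D (v!k) else \<zero>\<^bsub>P\<^esub>)" for k
      have yc: "\<forall>k. y k \<in> carrier P" using Dc vk zero_P_c by (auto simp: y_def)
      have y0: "y 0 = z" using lenv v0 z by (simp add: y_def)
      have "finite {a\<in>B. finsum (M a) (\<lambda>k. (row!k) \<odot>\<^bsub>M a\<^esub> y k a) {..<length row} \<noteq> \<zero>\<^bsub>M a\<^esub>}"
        if row: "row \<in> tau J' j0 I0" for row
      proof -
        obtain i where i: "i \<in> I0" and rowi: "row = map (r i) v" using row by (auto simp: tau_def v_def)
        have iI: "i \<in> I" using i I0 by auto
        have "finsum (M a) (\<lambda>k. (row!k) \<odot>\<^bsub>M a\<^esub> y k a) {..<length row} = L a D i" if a: "a \<in> B" for a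
        proof -
          have "finsum (M a) (\<lambda>k. (row!k) \<odot>\<^bsub>M a\<^esub> y k a) {..<length row}
              = finsum (M a) (\<lambda>k. r i (v!k) \<odot>\<^bsub>M a\<^esub> D (v!k) a) {..<length v}"
            using a vk Dc rc[OF iI]
            by (intro abelian_monoid.finsum_cong'[OF Ma_am[OF a]]) (auto simp: rowi y_def mem_P Pi_def)
          also have "\<dots> = L a D i" unfolding L_def
            using Dc D0 J' a by (intro reindex[symmetric, OF a iI dv vJ cov[OF i] vdisj])
              (auto simp: mem_P zero_P)
          finally show ?thesis .
        qed
        then have "{a\<in>B. finsum (M a) (\<lambda>k. (row!k) \<odot>\<^bsub>M a\<^esub> y k a) {..<length row} \<noteq> \<zero>\<^bsub>M a\<^esub>}
          = {a\<in>B. L a D i \<noteq> \<zero>\<^bsub>M a\<^esub>}" by auto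
        then show ?thesis using Df i by simp
      qed
      then show "z \<in> Gm (tau J' j0 I0)" unfolding Gm_def using yc y0 by blast
    qed
  next
    show "Gm (tau J' j0 I0) \<subseteq> Hs J' j0 I0"
    proof
      fix z assume "z \<in> Gm (tau J' j0 I0)"
      then obtain y where z: "z = y 0" and yc: "\<forall>k. y k \<in> carrier P"
        and yf: "\<forall>row\<in>tau J' j0 I0. finite {a\<in>B. finsum (M a) (\<lambda>k. (row!k) \<odot>\<^bsub>M a\<^esub> y k a) {..<length row} \<noteq> \<zero>\<^bsub>M a\<^esub>}"
        unfolding Gm_def by blast
      define idx where "idx j = (THE k. k < length v \<and> v!k = j)" for j
      have idx: "k < length v \<Longrightarrow> idx (v!k) = k" for k
        unfolding idx_def using dv by (auto simp: nth_eq_iff_index_eq)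
      define D where "D j = (if j \<in> set v then y (idx j) else \<zero>\<^bsub>P\<^esub>)" for j
      have Dk: "k < length v \<Longrightarrow> D (v!k) = y k" for k using idx by (simp add: D_def)
      have Dc: "\<forall>j\<in>J. D j \<in> carrier P" using yc zero_P_c by (auto simp: D_def)
      have D0: "\<forall>j\<in>J'. D j = \<zero>\<^bsub>P\<^esub>" using vdisj by (auto simp: D_def)
      have Dz: "D j0 = z" using Dk[of 0] lenv v0 z by simp
      have "finite {a\<in>B. L a D i \<noteq> \<zero>\<^bsub>M a\<^esub>}" if i: "i \<in> I0" for i
      proof -
        have iI: "i \<in> I" using i I0 by auto
        define row where "row = map (r i) v"
        have row: "row \<in> tau J' j0 I0" using i by (auto simp: tau_def row_def v_def)
        have "L a D i = finsum (M a) (\<lambda>k. (row!k) \<odot>\<^bsub>M a\<^esub> y k a) {..<length row}" if a: "a \<in> B" for a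
        proof -
          have "L a D i = finsum (M a) (\<lambda>k. r i (v!k) \<odot>\<^bsub>M a\<^esub> D (v!k) a) {..<length v}" unfolding L_def
            using Dc D0 J' a by (intro reindex[OF a iI dv vJ cov[OF i] vdisj]) (auto simp: mem_P zero_P)
          also have "\<dots> = finsum (M a) (\<lambda>k. (row!k) \<odot>\<^bsub>M a\<^esub> y k a) {..<length row}"
            using a vk yc rc[OF iI] Dk
            by (intro abelian_monoid.finsum_cong'[OF Ma_am[OF a]]) (auto simp: row_def mem_P Pi_def)
          finally show ?thesis .
        qed
        then have "{a\<in>B. L a D i \<noteq> \<zero>\<^bsub>M a\<^esub>} =
           {a\<in>B. finsum (M a) (\<lambda>k. (row!k) \<odot>\<^bsub>M a\<^esub> y k a) {..<length row} \<noteq> \<zero>\<^bsub>M a\<^esub>}" by auto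
        then show ?thesis using yf row by simp
      qed
      then show "z \<in> Hs J' j0 I0" unfolding Hs_def using Dc D0 Dz by blast
    qed
  qed
qed

end


context msetting begin

lemma Ma_cancel: "a \<in> B \<Longrightarrow> x \<in> carrier (M a) \<Longrightarrow> y \<in> carrier (M a) \<Longrightarrow> x = x \<oplus>\<^bsub>M a\<^esub> y \<Longrightarrow> y = \<zero>\<^bsub>M a\<^esub>"
proof -
  assume a: "a \<in> B" and h: "x \<in> carrier (M a)" "y \<in> carrier (M a)" "x = x \<oplus>\<^bsub>M a\<^esub> y"
  interpret abelian_group "M a" using ag[OF a] .
  show ?thesis using h by simp
qed

lemma cons_D: "cons G X \<Longrightarrow> (j,p) \<in> G \<Longrightarrow> X j = p"
  unfolding cons_def by auto

lemma good_func: "good G \<Longrightarrow> (j,p) \<in> G \<Longrightarrow> (j,q) \<in> G \<Longrightarrow> p = q"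
proof -
  assume g: "good G" and h: "(j,p) \<in> G" "(j,q) \<in> G"
  obtain X where "cons G X" using g unfolding good_def by blast
  then show ?thesis using h cons_D by metis
qed

lemma good_carrier: "good G \<Longrightarrow> (j,p) \<in> G \<Longrightarrow> j \<in> J \<Longrightarrow> p \<in> carrier P"
proof -
  assume g: "good G" and jp: "(j,p) \<in> G" and j: "j \<in> J"
  obtain X where "sol {} X" "cons G X" using g unfolding good_def by blast
  then show ?thesis using jp j cons_D unfolding sol_def by metis
qed

lemma step:
  assumes dom: "Domain Mx \<subseteq> J" and g: "good Mx" and j0: "j0 \<in> J" "j0 \<notin> Domain Mx"
  shows "\<exists>w. good (insert (j0,w) Mx)"
proof -
  define J' where "J' = Domain Mx"
  define Fam where "Fam = {I0. finite I0 \<and> I0 \<subseteq> I}"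
  define T where "T = tau J' j0"
  define rep where "rep t = (SOME K. K \<in> Fam \<and> T K = t)" for t
  have rep: "rep (T I0) \<in> Fam \<and> T (rep (T I0)) = T I0" if "I0 \<in> Fam" for I0
    unfolding rep_def by (rule someI_ex) (use that in blast)
  define I' where "I' = \<Union>(rep ` T ` Fam)"
  have j0': "j0 \<notin> J'" "J' \<subseteq> J" using j0 dom by (auto simp: J'_def)
  have "T ` Fam \<subseteq> {A. finite A \<and> A \<subseteq> lists (carrier R)}"
  proof
    fix t assume "t \<in> T ` Fam"
    then obtain I0 where "finite I0" "I0 \<subseteq> I" "t = T I0" by (auto simp: Fam_def)
    then show "t \<in> {A. finite A \<and> A \<subseteq> lists (carrier R)}"
      using tau_count[of I0 J' j0] j0 j0' by (simp add: T_def)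
  qed
  then have "countable (T ` Fam)"
    using countable_subset countable_Collect_finite_subset[OF countable_lists[OF countR]] by blast
  then have cI': "countable I'" unfolding I'_def
  proof (rule countable_UN)
    fix t assume "t \<in> T ` Fam"
    then show "countable (rep t)" using rep by (auto simp: Fam_def intro: countable_finite)
  qed
  have I'I: "I' \<subseteq> I" using rep by (auto simp: I'_def Fam_def)
  obtain Xf where Xf: "sol I' Xf" "cons Mx Xf" using countable_sol[OF cI' I'I dom g] by blast
  define w where "w = Xf j0"
  have "good (insert (j0,w) Mx)"
    unfolding good_def
  proof (intro allI impI)
    fix I0 assume I0: "finite I0 \<and> I0 \<subseteq> I"
    then have I0F: "I0 \<in> Fam" by (simp add: Fam_def)
    define K where "K = rep (T I0)"
    have KF: "K \<in> Fam" and TK: "T K = T I0" using rep[OF I0F] by (auto simp: K_def)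
    have KI': "K \<subseteq> I'" using I0F by (auto simp: I'_def K_def)
    obtain X' where X': "sol (I0 \<union> K) X'" "cons Mx X'"
    proof -
      have "finite (I0 \<union> K) \<and> I0 \<union> K \<subseteq> I" using I0 KF by (auto simp: Fam_def)
      then show ?thesis using g that unfolding good_def by blast
    qed
    have Xfc: "\<forall>j\<in>J. Xf j \<in> carrier P" and X'c: "\<forall>j\<in>J. X' j \<in> carrier P"
      using Xf X' by (auto simp: sol_def)
    define D where "D j = (\<lambda>a\<in>B. Xf j a \<ominus>\<^bsub>M a\<^esub> X' j a)" for j
    have Dc: "\<forall>j\<in>J. D j \<in> carrier P" using Xfc X'c by (auto simp: D_def mem_P)
    have D0: "\<forall>j\<in>J'. D j = \<zero>\<^bsub>P\<^esub>"
    proof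
      fix j assume "j \<in> J'"
      then obtain p where jp: "(j,p) \<in> Mx" by (auto simp: J'_def)
      have "Xf j = p" "X' j = p" using jp Xf(2) X'(2) cons_D by metis+
      moreover have "j \<in> J" using jp dom by auto
      ultimately show "D j = \<zero>\<^bsub>P\<^esub>" using Xfc by (auto simp: D_def zero_P mem_P)
    qed
    have XfD: "L a Xf i = L a X' i \<oplus>\<^bsub>M a\<^esub> L a D i" if "a \<in> B" "i \<in> I" for a i
    proof -
      have "L a Xf i = L a (\<lambda>j. \<lambda>a\<in>B. X' j a \<oplus>\<^bsub>M a\<^esub> D j a) i"
        using that Xfc X'c Dc by (intro L_cong) (auto simp: D_def mem_P)
      also have "\<dots> = L a X' i \<oplus>\<^bsub>M a\<^esub> L a D i" using that X'c Dc by (intro L_add)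
      finally show ?thesis .
    qed
    have Dh: "\<forall>i\<in>K. finite {a\<in>B. L a D i \<noteq> \<zero>\<^bsub>M a\<^esub>}"
    proof
      fix i assume iK: "i \<in> K"
      have iI: "i \<in> I" using iK KF by (auto simp: Fam_def)
      have f1: "finite {a\<in>B. L a Xf i \<noteq> mm i a}" using Xf iK KI' by (auto simp: sol_def)
      have f2: "finite {a\<in>B. L a X' i \<noteq> mm i a}" using X' iK by (auto simp: sol_def)
      have "{a\<in>B. L a D i \<noteq> \<zero>\<^bsub>M a\<^esub>} \<subseteq> {a\<in>B. L a Xf i \<noteq> mm i a} \<union> {a\<in>B. L a X' i \<noteq> mm i a}"
      proof (rule subsetI, rule ccontr)
        fix a assume a: "a \<in> {a\<in>B. L a D i \<noteq> \<zero>\<^bsub>M a\<^esub>}"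
          and n: "a \<notin> {a\<in>B. L a Xf i \<noteq> mm i a} \<union> {a\<in>B. L a X' i \<noteq> mm i a}"
        then have aB: "a \<in> B" and e1: "L a Xf i = mm i a" and e2: "L a X' i = mm i a" by auto
        have "mm i a = mm i a \<oplus>\<^bsub>M a\<^esub> L a D i" using XfD[OF aB iI] e1 e2 by simp
        moreover have "mm i a \<in> carrier (M a)" using mmc iI aB by (auto simp: mem_P)
        ultimately have "L a D i = \<zero>\<^bsub>M a\<^esub>" using Ma_cancel[OF aB] L_closed[OF iI aB] Dc by blast
        then show False using a by simp
      qed
      then show "finite {a\<in>B. L a D i \<noteq> \<zero>\<^bsub>M a\<^esub>}" using f1 f2 finite_subset by blast
    qed
    have "D j0 \<in> Hs J' j0 K" unfolding Hs_def using Dc D0 Dh by blast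
    also have "Hs J' j0 K = Hs J' j0 I0"
      using H_eq[of K J' j0] H_eq[of I0 J' j0] KF I0 j0 j0' TK by (auto simp: Fam_def T_def)
    finally obtain D' where D'j0': "D j0 = D' j0" and D'c: "\<forall>j\<in>J. D' j \<in> carrier P"
        and D'0: "\<forall>j\<in>J'. D' j = \<zero>\<^bsub>P\<^esub>" and D'h: "\<forall>i\<in>I0. finite {a\<in>B. L a D' i \<noteq> \<zero>\<^bsub>M a\<^esub>}"
      unfolding Hs_def by blast
    have D'j0: "D' j0 = D j0" using D'j0' by simp
    define X'' where "X'' j = (\<lambda>a\<in>B. X' j a \<oplus>\<^bsub>M a\<^esub> D' j a)" for j
    have X''c: "\<forall>j\<in>J. X'' j \<in> carrier P" using X'c D'c by (auto simp: X''_def mem_P)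
    have "finite {a\<in>B. L a X'' i \<noteq> mm i a}" if i: "i \<in> I0" for i
    proof -
      have iI: "i \<in> I" using i I0 by auto
      have f2: "finite {a\<in>B. L a X' i \<noteq> mm i a}" using X' i by (auto simp: sol_def)
      have "{a\<in>B. L a X'' i \<noteq> mm i a} \<subseteq> {a\<in>B. L a X' i \<noteq> mm i a} \<union> {a\<in>B. L a D' i \<noteq> \<zero>\<^bsub>M a\<^esub>}"
      proof (rule subsetI, rule ccontr)
        fix a assume a: "a \<in> {a\<in>B. L a X'' i \<noteq> mm i a}"
          and n: "a \<notin> {a\<in>B. L a X' i \<noteq> mm i a} \<union> {a\<in>B. L a D' i \<noteq> \<zero>\<^bsub>M a\<^esub>}"
        then have aB: "a \<in> B" and e1: "L a X' i = mm i a" and e2: "L a D' i = \<zero>\<^bsub>M a\<^esub>" by auto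
        have "L a X'' i = L a X' i \<oplus>\<^bsub>M a\<^esub> L a D' i"
          unfolding X''_def using aB iI X'c D'c by (intro L_add)
        moreover have "mm i a \<in> carrier (M a)" using mmc iI aB by (auto simp: mem_P)
        ultimately show False using a e1 e2 aB by simp
      qed
      then show ?thesis using f2 D'h i finite_subset by blast
    qed
    then have "sol I0 X''" using X''c by (simp add: sol_def)
    moreover have "cons (insert (j0,w) Mx) X''"
      unfolding cons_def
    proof (clarify)
      fix j p assume "(j,p) \<in> insert (j0,w) Mx"
      then consider "j = j0" "p = w" | "(j,p) \<in> Mx" by blast
      then show "X'' j = p"
      proof cases
        case 1
        have "X'' j0 = (\<lambda>a\<in>B. Xf j0 a)"
          unfolding X''_def
        proof (rule restrict_ext)
          fix a assume aB: "a \<in> B"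
          have "D' j0 a = Xf j0 a \<ominus>\<^bsub>M a\<^esub> X' j0 a" using D'j0 aB by (simp add: D_def)
          then show "X' j0 a \<oplus>\<^bsub>M a\<^esub> D' j0 a = Xf j0 a" using aB Xfc X'c j0 by (simp add: mem_P)
        qed
        also have "\<dots> = Xf j0" using Xfc j0 by (auto simp: mem_P extensional_def)
        finally show ?thesis using 1 by (simp add: w_def)
      next
        case 2
        have jJ: "j \<in> J" "j \<in> J'" using 2 dom by (auto simp: J'_def)
        have "X' j = p" using 2 X'(2) cons_D by metis
        then show ?thesis using D'0 jJ X'c
          by (auto simp: X''_def zero_P mem_P extensional_def)
      qed
    qed
    ultimately show "\<exists>X. sol I0 X \<and> cons (insert (j0, w) Mx) X" by blast
  qed
  then show ?thesis by blast
qed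

end


context msetting begin

lemma consI: "(\<And>j p. (j,p) \<in> G \<Longrightarrow> X j = p) \<Longrightarrow> cons G X"
  by (auto simp: cons_def)

lemma main:
  assumes g0: "good {}"
  shows "\<exists>X. sol I X"
proof -
  define A where "A = {G. Domain G \<subseteq> J \<and> good G}"
  have chain: "\<Union>C \<in> A" if C: "C \<in> chains A" for C
  proof (cases "C = {}")
    case True
    then show ?thesis using g0 by (simp add: A_def)
  next
    case False
    have CA: "C \<subseteq> A" using C by (auto simp: chains_def)
    have ch: "subset.chain A C" using C by (simp add: chains_alt_def)
    have domC: "Domain (\<Union>C) \<subseteq> J" using CA by (auto simp: A_def)
    have func: "p = q" if pq: "(j,p) \<in> \<Union>C" "(j,q) \<in> \<Union>C" for j p q
    proof -
      obtain G1 G2 where G: "G1 \<in> C" "G2 \<in> C" "(j,p) \<in> G1" "(j,q) \<in> G2" using pq by auto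
      have "G1 \<subseteq> G2 \<or> G2 \<subseteq> G1" using C G by (auto simp: chains_def chain_subset_def)
      moreover have "good G1" "good G2" using G CA by (auto simp: A_def)
      ultimately show ?thesis using good_func G by blast
    qed
    have theC: "(THE p. (j,p) \<in> \<Union>C) = p" if "(j,p) \<in> \<Union>C" for j p
      using func that by blast
    have "good (\<Union>C)" unfolding good_def
    proof (intro allI impI)
      fix I0 assume I0: "finite I0 \<and> I0 \<subseteq> I"
      define V where "V = Vars I0"
      have fV: "finite V" using Vars_fin I0 by (simp add: V_def)
      define Gf where "Gf = \<Union>C \<inter> (V \<times> UNIV)"
      have "Gf \<subseteq> (\<lambda>j. (j, THE p. (j,p) \<in> \<Union>C)) ` V"
        using theC by (force simp: Gf_def)
      then have fGf: "finite Gf" using fV finite_subset by blast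
      obtain G where GC: "G \<in> C" and GfG: "Gf \<subseteq> G"
        using finite_subset_Union_chain[OF fGf _ False ch] by (auto simp: Gf_def)
      have "good G" using GC CA by (auto simp: A_def)
      then obtain X where X: "sol I0 X" "cons G X" using I0 unfolding good_def by blast
      define X' where "X' j = (if j \<in> Domain (\<Union>C) then (THE p. (j,p) \<in> \<Union>C) else X j)" for j
      have X'c: "\<forall>j\<in>J. X' j \<in> carrier P"
      proof
        fix j assume j: "j \<in> J"
        show "X' j \<in> carrier P"
        proof (cases "j \<in> Domain (\<Union>C)")
          case True
          then obtain p G' where pG: "(j,p) \<in> G'" "G' \<in> C" by auto
          then have "good G'" using CA by (auto simp: A_def)
          then have "p \<in> carrier P" using good_carrier pG j by blast
          moreover have "X' j = p" using theC[of j p] pG True by (auto simp: X'_def)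
          ultimately show ?thesis by simp
        next
          case False
          then show ?thesis using X j by (auto simp: X'_def sol_def)
        qed
      qed
      have Xc: "\<forall>j\<in>J. X j \<in> carrier P" using X by (simp add: sol_def)
      have "finite {a\<in>B. L a X' i \<noteq> mm i a}" if i: "i \<in> I0" for i
      proof -
        have iI: "i \<in> I" using i I0 by auto
        have "L a X' i = L a X i" if a: "a \<in> B" for a
        proof (rule L_cong[OF iI a X'c Xc])
          fix j assume j: "j \<in> J" "r i j \<noteq> \<zero>\<^bsub>R\<^esub>"
          then have jV: "j \<in> V" using i by (auto simp: V_def Vars_def)
          show "X' j a = X j a"
          proof (cases "j \<in> Domain (\<Union>C)")
            case True
            then obtain p where jp: "(j,p) \<in> \<Union>C" by auto
            then have "(j,p) \<in> G" using GfG jV by (auto simp: Gf_def)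
            then have "X j = p" using X(2) cons_D by metis
            then show ?thesis using jp theC by (simp add: X'_def)
          qed (simp add: X'_def)
        qed
        then have "{a\<in>B. L a X' i \<noteq> mm i a} = {a\<in>B. L a X i \<noteq> mm i a}" by auto
        then show ?thesis using X i by (simp add: sol_def)
      qed
      then have "sol I0 X'" using X'c by (simp add: sol_def)
      moreover have "cons (\<Union>C) X'"
      proof (rule consI)
        fix j p assume jp: "(j,p) \<in> \<Union>C"
        then have "j \<in> Domain (\<Union>C)" by blast
        then show "X' j = p" using theC[OF jp] by (simp add: X'_def)
      qed
      ultimately show "\<exists>X. sol I0 X \<and> cons (\<Union>C) X" by blast
    qed
    then show ?thesis using domC by (simp add: A_def)
  qed
  obtain Mx where MxA: "Mx \<in> A" and maxl: "\<forall>X\<in>A. Mx \<subseteq> X \<longrightarrow> X = Mx"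
    using Zorn_Lemma[of A] chain by blast
  have domM: "Domain Mx \<subseteq> J" and gM: "good Mx" using MxA by (auto simp: A_def)
  have domJ: "Domain Mx = J"
  proof (rule ccontr)
    assume "Domain Mx \<noteq> J"
    then obtain j0 where j0: "j0 \<in> J" "j0 \<notin> Domain Mx" using domM by auto
    then obtain w where gw: "good (insert (j0,w) Mx)" using step[OF domM gM] by blast
    then have "insert (j0,w) Mx \<in> A" using domM j0 by (auto simp: A_def)
    then have "insert (j0,w) Mx = Mx" using maxl by blast
    then show False using j0 by auto
  qed
  define X where "X j = (THE p. (j,p) \<in> Mx)" for j
  have Xj: "(j,p) \<in> Mx \<Longrightarrow> X j = p" for j p
    unfolding X_def using good_func[OF gM] by blast
  have Xc: "\<forall>j\<in>J. X j \<in> carrier P"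
  proof
    fix j assume j: "j \<in> J"
    then obtain p where "(j,p) \<in> Mx" using domJ by auto
    then show "X j \<in> carrier P" using Xj good_carrier[OF gM] j by auto
  qed
  have "finite {a\<in>B. L a X i \<noteq> mm i a}" if i: "i \<in> I" for i
  proof -
    obtain Y where Y: "sol {i} Y" "cons Mx Y" using gM i unfolding good_def by (meson empty_subsetI finite.intros insert_subset)
    have Yc: "\<forall>j\<in>J. Y j \<in> carrier P" using Y by (simp add: sol_def)
    have "L a X i = L a Y i" if a: "a \<in> B" for a
    proof (rule L_cong[OF i a Xc Yc])
      fix j assume "j \<in> J"
      then obtain p where "(j,p) \<in> Mx" using domJ by auto
      then show "X j a = Y j a" using Xj Y(2) cons_D by metis
    qed
    then have "{a\<in>B. L a X i \<noteq> mm i a} = {a\<in>B. L a Y i \<noteq> mm i a}" by auto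
    then show ?thesis using Y by (simp add: sol_def)
  qed
  then show ?thesis using Xc unfolding sol_def by blast
qed

end


context msetting begin

lemma lc_Q:
  assumes i: "i \<in> I" and Xc: "\<forall>j\<in>J. X j \<in> carrier P"
  shows "lin_comb R Q r (\<lambda>j. cls (X j)) i J = cls (\<lambda>a\<in>B. L a X i)"
proof -
  have "lin_comb R Q r (\<lambda>j. cls (X j)) i J
      = cls (\<lambda>a\<in>B. finsum (M a) (\<lambda>j. r i j \<odot>\<^bsub>M a\<^esub> X j a) {j\<in>J. r i j \<noteq> \<zero>\<^bsub>R\<^esub>})"
    unfolding lin_comb_def using rfin[OF i] rc[OF i] Xc by (intro finsum_Q) auto
  also have "\<dots> = cls (\<lambda>a\<in>B. L a X i)" by (simp add: L_def lin_comb_def)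
  finally show ?thesis .
qed

lemma bridge:
  assumes mcls: "\<forall>i\<in>I. m i = cls (mm i)" and I0: "I0 \<subseteq> I"
  shows "sys_solvable R Q I0 J r m \<longleftrightarrow> (\<exists>X. sol I0 X)"
proof
  assume "\<exists>X. sol I0 X"
  then obtain X where X: "sol I0 X" by blast
  have Xc: "\<forall>j\<in>J. X j \<in> carrier P" using X by (simp add: sol_def)
  have "lin_comb R Q r (\<lambda>j. cls (X j)) i J = m i" if i: "i \<in> I0" for i
  proof -
    have iI: "i \<in> I" using i I0 by auto
    have Lc: "(\<lambda>a\<in>B. L a X i) \<in> carrier P" using L_closed[OF iI _ Xc] by (auto simp: mem_P)
    have e: "{a\<in>B. (\<lambda>a\<in>B. L a X i) a \<noteq> mm i a} = {a\<in>B. L a X i \<noteq> mm i a}" by auto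
    have "finite {a\<in>B. (\<lambda>a\<in>B. L a X i) a \<noteq> mm i a}" unfolding e using X i by (simp add: sol_def)
    then have "cls (\<lambda>a\<in>B. L a X i) = cls (mm i)" using cls_eq_iff[OF Lc] mmc iI by simp
    then show ?thesis using lc_Q[OF iI Xc] mcls iI by simp
  qed
  moreover have "\<forall>j\<in>J. cls (X j) \<in> carrier Q" using Xc by (simp add: carrier_Q)
  ultimately show "sys_solvable R Q I0 J r m" unfolding sys_solvable_def
    by (intro exI[of _ "\<lambda>j. cls (X j)"]) auto
next
  assume "sys_solvable R Q I0 J r m"
  then obtain x where xc: "\<forall>j\<in>J. x j \<in> carrier Q" and xe: "\<forall>i\<in>I0. lin_comb R Q r x i J = m i"
    unfolding sys_solvable_def by blast
  define X where "X j = (SOME y. y \<in> carrier P \<and> x j = cls y)" for j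
  have XP: "X j \<in> carrier P \<and> x j = cls (X j)" if "j \<in> J" for j
  proof -
    have "\<exists>y. y \<in> carrier P \<and> x j = cls y" using xc that by (auto simp: carrier_Q)
    then show ?thesis unfolding X_def by (rule someI_ex)
  qed
  have Xc: "\<forall>j\<in>J. X j \<in> carrier P" using XP by blast
  have "finite {a\<in>B. L a X i \<noteq> mm i a}" if i: "i \<in> I0" for i
  proof -
    have iI: "i \<in> I" using i I0 by auto
    have "lin_comb R Q r x i J = lin_comb R Q r (\<lambda>j. cls (X j)) i J"
      unfolding lin_comb_def using XP rc[OF iI]
      by (intro abelian_monoid.finsum_cong'[OF Q_am]) (auto simp: smult_Q carrier_Q smult_P_c)
    then have "cls (\<lambda>a\<in>B. L a X i) = cls (mm i)" using lc_Q[OF iI Xc] xe i mcls iI by simp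
    moreover have Lc: "(\<lambda>a\<in>B. L a X i) \<in> carrier P" using L_closed[OF iI _ Xc] by (auto simp: mem_P)
    ultimately have "finite {a\<in>B. (\<lambda>a\<in>B. L a X i) a \<noteq> mm i a}"
      using cls_eq_iff[OF Lc] mmc iI by simp
    moreover have e: "{a\<in>B. (\<lambda>a\<in>B. L a X i) a \<noteq> mm i a} = {a\<in>B. L a X i \<noteq> mm i a}" by auto
    ultimately show ?thesis by simp
  qed
  then show "\<exists>X. sol I0 X" using Xc unfolding sol_def by blast
qed

end

theorem proposition1:
  fixes R :: "'r ring" and B :: "'b set" and M :: "'b \<Rightarrow> ('r, 'm) module"
    and I :: "'i set" and J :: "'j set"
  assumes "ring R" and "countable (carrier R)" and "countable B"
    and "\<forall>a\<in>B. left_module R (M a)"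
  shows "compact_for R (quot_module (prod_module B M) (dsum_carrier B M)) I J"
  unfolding compact_for_def
proof (intro allI impI, elim conjE)
  fix r :: "'i \<Rightarrow> 'j \<Rightarrow> 'r" and m
  assume rf: "row_finite_system R I J r"
    and mc: "\<forall>i\<in>I. m i \<in> carrier (quot_module (prod_module B M) (dsum_carrier B M))"
    and fs: "\<forall>I0. finite I0 \<and> I0 \<subseteq> I \<longrightarrow> sys_solvable R (quot_module (prod_module B M) (dsum_carrier B M)) I0 J r m"
  interpret qsetting R B M by (rule qsetting.intro) (use assms in auto)
  define mm where "mm i = (SOME y. y \<in> carrier P \<and> m i = cls y)" for i
  have mmP: "mm i \<in> carrier P \<and> m i = cls (mm i)" if "i \<in> I" for i
  proof -
    have "\<exists>y. y \<in> carrier P \<and> m i = cls y" using mc that by (auto simp: carrier_Q)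
    then show ?thesis unfolding mm_def by (rule someI_ex)
  qed
  interpret msetting R B M I J r mm
    by (intro msetting.intro msetting_axioms.intro qsetting_axioms) (use assms rf mmP in auto)
  have mcls: "\<forall>i\<in>I. m i = cls (mm i)" using mmP by blast
  have "good {}" unfolding good_def
  proof (intro allI impI)
    fix I0 assume I0: "finite I0 \<and> I0 \<subseteq> I"
    then have "\<exists>X. sol I0 X" using fs bridge[OF mcls] by blast
    then show "\<exists>X. sol I0 X \<and> cons {} X" by (auto simp: cons_def)
  qed
  then obtain X where "sol I X" using main by blast
  then show "sys_solvable R (quot_module (prod_module B M) (dsum_carrier B M)) I J r m"
    using bridge[OF mcls] by blast
qed


end
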